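(* Let $\mathbf p\in\mathbb{Z}^2\setminus\{\mathbf0\}$ and $\mathbf a\in\mathbb{Z}^2$ with $|\mathbf a|<|\mathbf p|$ and $|\mathbf a+k\mathbf p|>|\mathbf p|$ for all $k\in\mathbb{Z}\setminus\{0\}$, and set $\rho_k=\frac1{|\mathbf p|^2}-\frac1{|\mathbf a+k\mathbf p|^2}$ for $k\in\mathbb{Z}$. Suppose that $\sqrt{-\rho_1(\rho_0+\rho_2)}$ or $\sqrt{-\rho_{-1}(\rho_0+\rho_{-2})}$ is a positive real number. Then the infinite matrix $M=(M_{j,k})_{j,k\in\mathbb{Z}}$ with $M_{j,j+1}=\rho_{j+1}$, $M_{j,j-1}=-\rho_{j-1}$ and all other entries zero has a positive real eigenvalue $\lambda$, and an associated eigenvector lies in $\ell^2(\mathbb{Z})$; that is, there exist $\lambda>0$ and a nonzero real sequence $\mathbf v=(v_k)_{k\in\mathbb{Z}}\in\ell^2(\mathbb{Z})$ with $\lambda v_k=\rho_{k+1}v_{k+1}-\rho_{k-1}v_{k-1}$ for all $k\in\mathbb{Z}$.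
   Context: $M$ is (up to a scalar factor) the linearisation of the 2D Euler equations on the torus, written in Fourier coefficients $\omega_{\mathbf a+k\mathbf p}$, about the equilibrium with Fourier coefficients nonzero only at $\pm\mathbf p$, restricted to the invariant subspace of modes $\{\mathbf a+k\mathbf p:k\in\mathbb{Z}\}$. *)

theory Defs
  imports "HOL-Analysis.Analysis"
begin

definition vnorm :: "int \<times> int \<Rightarrow> real" where
  "vnorm v = sqrt ((real_of_int (fst v))\<^sup>2 + (real_of_int (snd v))\<^sup>2)"

definition vadd_mult :: "int \<times> int \<Rightarrow> int \<Rightarrow> int \<times> int \<Rightarrow> int \<times> int" where
  "vadd_mult a k p = (fst a + k * fst p, snd a + k * snd p)"

definition rho :: "int \<times> int \<Rightarrow> int \<times> int \<Rightarrow> int \<Rightarrow> real" where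
  "rho p a k = 1 / (vnorm p)\<^sup>2 - 1 / (vnorm (vadd_mult a k p))\<^sup>2"

end

theory Submission
  imports Defs
begin

fun psi :: "(nat\<Rightarrow>real) \<Rightarrow> (nat\<Rightarrow>real) \<Rightarrow> real \<Rightarrow> real \<Rightarrow> nat \<Rightarrow> real" where
  "psi a b mu t 0 = 1"
| "psi a b mu t (Suc 0) = t"
| "psi a b mu t (Suc (Suc n)) = psi a b mu t (Suc n) +
     (a (Suc n) * (psi a b mu t (Suc n) - psi a b mu t n) + mu * b (Suc n) * psi a b mu t (Suc n)) / a (Suc (Suc n))"

definition Rec :: "(nat\<Rightarrow>real) \<Rightarrow> (nat\<Rightarrow>real) \<Rightarrow> real \<Rightarrow> (nat\<Rightarrow>real) \<Rightarrow> bool" where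
  "Rec a b mu x \<longleftrightarrow> (\<forall>n. a (Suc (Suc n)) * (x (Suc (Suc n)) - x (Suc n)) - a (Suc n) * (x (Suc n) - x n)
       = mu * b (Suc n) * x (Suc n))"

lemma Rec_psi:
  assumes "\<forall>n. a (Suc n) > 0"
  shows "Rec a b mu (psi a b mu t)"
  unfolding Rec_def
proof
  fix n
  have "a (Suc (Suc n)) \<noteq> 0" using assms by (metis less_irrefl)
  then show "a (Suc (Suc n)) * (psi a b mu t (Suc (Suc n)) - psi a b mu t (Suc n)) - a (Suc n) * (psi a b mu t (Suc n) - psi a b mu t n)
       = mu * b (Suc n) * psi a b mu t (Suc n)"
    by (simp add: field_simps)
qed

lemma Rec_diff:
  assumes "Rec a b mu x" "Rec a b mu y"
  shows "Rec a b mu (\<lambda>n. x n - y n)"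
  using assms unfolding Rec_def
proof (intro allI)
  fix n
  assume "\<forall>n. a (Suc (Suc n)) * (x (Suc (Suc n)) - x (Suc n)) - a (Suc n) * (x (Suc n) - x n) = mu * b (Suc n) * x (Suc n)"
     and "\<forall>n. a (Suc (Suc n)) * (y (Suc (Suc n)) - y (Suc n)) - a (Suc n) * (y (Suc n) - y n) = mu * b (Suc n) * y (Suc n)"
  then have "a (Suc (Suc n)) * (x (Suc (Suc n)) - x (Suc n)) - a (Suc n) * (x (Suc n) - x n) = mu * b (Suc n) * x (Suc n)"
     "a (Suc (Suc n)) * (y (Suc (Suc n)) - y (Suc n)) - a (Suc n) * (y (Suc n) - y n) = mu * b (Suc n) * y (Suc n)" by auto
  then show "a (Suc (Suc n)) * (x (Suc (Suc n)) - y (Suc (Suc n)) - (x (Suc n) - y (Suc n))) - a (Suc n) * (x (Suc n) - y (Suc n) - (x n - y n)) =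
         mu * b (Suc n) * (x (Suc n) - y (Suc n))"
    by (simp add: algebra_simps)
qed

lemma Rec_neg:
  assumes "Rec a b mu x"
  shows "Rec a b mu (\<lambda>n. - x n)"
proof -
  have "Rec a b mu (\<lambda>n. 0)" unfolding Rec_def by simp
  from Rec_diff[OF this assms] show ?thesis by simp
qed

lemma propA:
  assumes R: "Rec a b mu x" and a: "\<forall>n. a (Suc n) > 0" and b: "\<forall>n. b n \<ge> 0" and mu: "mu \<ge> 0"
    and h1: "x (Suc n) > x n" and h2: "x (Suc n) > 0" and nj: "n \<le> j"
  shows "x (Suc j) > x j \<and> x (Suc j) > 0"
  using nj
proof (induction j rule: dec_induct)
  case base
  then show ?case using h1 h2 by simp
next
  case (step j)
  have e: "a (Suc (Suc j)) * (x (Suc (Suc j)) - x (Suc j)) = a (Suc j) * (x (Suc j) - x j) + mu * b (Suc j) * x (Suc j)"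
    using R unfolding Rec_def by (metis diff_eq_eq add.commute)
  have p1: "a (Suc j) * (x (Suc j) - x j) > 0" using a step.IH by simp
  have p2: "mu * b (Suc j) * x (Suc j) \<ge> 0" using mu b step.IH by simp
  have "a (Suc (Suc j)) * (x (Suc (Suc j)) - x (Suc j)) > 0" using e p1 p2 by linarith
  then have "x (Suc (Suc j)) - x (Suc j) > 0" using a zero_less_mult_pos by blast
  then show ?case using step.IH by simp
qed

lemma propB:
  assumes R: "Rec a b mu x" and a: "\<forall>n. a (Suc n) > 0" and b: "\<forall>n. b n \<ge> 0" and mu: "mu \<ge> 0"
    and h1: "x (Suc n) < x n" and h2: "x (Suc n) < 0" and nj: "n \<le> j"
  shows "x (Suc j) < x j \<and> x (Suc j) < 0"
  using propA[OF Rec_neg[OF R] a b mu, of n j] h1 h2 nj by simp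

definition escA :: "(nat\<Rightarrow>real) \<Rightarrow> (nat\<Rightarrow>real) \<Rightarrow> real \<Rightarrow> real \<Rightarrow> bool" where
  "escA a b mu t \<longleftrightarrow> (\<exists>n. psi a b mu t (Suc n) > psi a b mu t n \<and> psi a b mu t (Suc n) > 0)"

definition escB :: "(nat\<Rightarrow>real) \<Rightarrow> (nat\<Rightarrow>real) \<Rightarrow> real \<Rightarrow> real \<Rightarrow> bool" where
  "escB a b mu t \<longleftrightarrow> (\<exists>n. psi a b mu t (Suc n) < psi a b mu t n \<and> psi a b mu t (Suc n) < 0)"

lemma esc_disj:
  assumes a: "\<forall>n. a (Suc n) > 0" and b: "\<forall>n. b n \<ge> 0" and mu: "mu \<ge> 0"
    and "escA a b mu t" "escB a b mu t"
  shows False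
proof -
  obtain n where n: "psi a b mu t (Suc n) > psi a b mu t n" "psi a b mu t (Suc n) > 0"
    using assms(4) unfolding escA_def by blast
  obtain m where m: "psi a b mu t (Suc m) < psi a b mu t m" "psi a b mu t (Suc m) < 0"
    using assms(5) unfolding escB_def by blast
  have R: "Rec a b mu (psi a b mu t)" using Rec_psi a by blast
  have "psi a b mu t (Suc (max n m)) > 0"
    using propA[OF R a b mu n, of "max n m"] by simp
  moreover have "psi a b mu t (Suc (max n m)) < 0"
    using propB[OF R a b mu m, of "max n m"] by simp
  ultimately show False by simp
qed

lemma escA_1:
  assumes a: "\<forall>n. a (Suc n) > 0" and b: "\<forall>n. b n \<ge> 1" and mu: "mu > 0"
  shows "escA a b mu 1"
proof -
  have "mu * b 1 / a 2 > 0" using a b mu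
    by (metis One_nat_def Suc_1 divide_pos_pos less_le_trans mult_pos_pos zero_less_one)
  then have "psi a b mu 1 2 > 1" by (simp add: numeral_2_eq_2)
  then show ?thesis unfolding escA_def
    by (intro exI[of _ 1]) (simp add: numeral_2_eq_2)
qed

lemma escB_0:
  assumes a: "\<forall>n. a (Suc n) > 0"
  shows "escB a b mu 0"
proof -
  have "- a 1 / a 2 < 0" using a
    by (metis One_nat_def Suc_1 divide_pos_pos neg_less_0_iff_less divide_minus_left)
  then have "psi a b mu 0 2 < 0" by (simp add: numeral_2_eq_2)
  then show ?thesis unfolding escB_def
    by (intro exI[of _ 1]) (simp add: numeral_2_eq_2)
qed

declare psi.simps(3)[simp del]

lemma good_pos:
  assumes a: "\<forall>n. a (Suc n) > 0" and b: "\<forall>n. b n \<ge> 0" and mu: "mu \<ge> 0"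
    and nA: "\<not> escA a b mu t" and nB: "\<not> escB a b mu t"
  shows "psi a b mu t n > 0 \<and> psi a b mu t (Suc n) \<le> psi a b mu t n"
proof -
  let ?x = "psi a b mu t"
  have R: "Rec a b mu ?x" using Rec_psi a by blast
  have pos: "?x n > 0" for n
  proof (induction n)
    case 0
    then show ?case by simp
  next
    case (Suc n)
    show ?case
    proof (rule ccontr)
      assume "\<not> ?x (Suc n) > 0"
      then consider "?x (Suc n) < 0" | "?x (Suc n) = 0" by linarith
      then show False
      proof cases
        case 1
        then have "escB a b mu t" unfolding escB_def using Suc.IH
          by (intro exI[of _ n]) simp
        then show ?thesis using nB by simp
      next
        case 2
        have e: "a (Suc (Suc n)) * (?x (Suc (Suc n)) - ?x (Suc n)) - a (Suc n) * (?x (Suc n) - ?x n) = mu * b (Suc n) * ?x (Suc n)"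
          using R unfolding Rec_def by blast
        then have "a (Suc (Suc n)) * ?x (Suc (Suc n)) = - a (Suc n) * ?x n" using 2 by simp
        moreover have "- a (Suc n) * ?x n < 0" using a Suc.IH by simp
        ultimately have "a (Suc (Suc n)) * ?x (Suc (Suc n)) < 0" by simp
        then have "?x (Suc (Suc n)) < 0" using a[rule_format, of "Suc n"] by (simp add: mult_less_0_iff)
        then have "escB a b mu t" unfolding escB_def using 2
          by (intro exI[of _ "Suc n"]) simp
        then show ?thesis using nB by simp
      qed
    qed
  qed
  have "?x (Suc n) \<le> ?x n"
    using nA pos[of "Suc n"] unfolding escA_def by (meson not_less)
  then show ?thesis using pos by simp
qed

lemma Rec_telescope:
  assumes R: "Rec a b mu x"
  shows "a (Suc n) * (x (Suc n) - x n) = a 1 * (x 1 - x 0) + mu * (\<Sum>j<n. b (Suc j) * x (Suc j))"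
proof (induction n)
  case 0
  then show ?case by simp
next
  case (Suc n)
  have e: "a (Suc (Suc n)) * (x (Suc (Suc n)) - x (Suc n)) - a (Suc n) * (x (Suc n) - x n) = mu * b (Suc n) * x (Suc n)"
    using R unfolding Rec_def by blast
  show ?case using e Suc.IH by (simp add: algebra_simps)
qed

lemma good_summable:
  assumes a: "\<forall>n. a (Suc n) > 0" and b: "\<forall>n. b n \<ge> 1" and mu: "mu > 0"
    and nA: "\<not> escA a b mu t" and nB: "\<not> escB a b mu t"
  shows "summable (\<lambda>n. b n * psi a b mu t n)"
proof -
  let ?x = "psi a b mu t"
  have b0: "\<forall>n. b n \<ge> 0" using b by (meson order.trans zero_le_one)
  have g: "?x n > 0 \<and> ?x (Suc n) \<le> ?x n" for n using good_pos[OF a b0 _ nA nB] mu by simp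
  have R: "Rec a b mu ?x" using Rec_psi a by blast
  have bd: "(\<Sum>j<n. b (Suc j) * ?x (Suc j)) \<le> a 1 / mu" for n
  proof -
    have t: "a (Suc n) * (?x (Suc n) - ?x n) = a 1 * (?x 1 - ?x 0) + mu * (\<Sum>j<n. b (Suc j) * ?x (Suc j))"
      using Rec_telescope[OF R] by blast
    have "a (Suc n) * (?x (Suc n) - ?x n) \<le> 0" using g[of n] a[rule_format, of n] by (intro mult_nonneg_nonpos) auto
    moreover have "a 1 * (?x 1 - ?x 0) \<ge> - a 1" using g[of 0] g[of 1] a[rule_format, of 0] by (simp add: algebra_simps)
    ultimately have "mu * (\<Sum>j<n. b (Suc j) * ?x (Suc j)) \<le> a 1" using t by linarith
    then show ?thesis using mu by (simp add: field_simps mult.commute)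
  qed
  have "summable (\<lambda>j. b (Suc j) * ?x (Suc j))"
  proof (rule bounded_imp_summable)
    show "0 \<le> b (Suc n) * ?x (Suc n)" for n using b0 g[of "Suc n"] by simp
    show "(\<Sum>k\<le>n. b (Suc k) * ?x (Suc k)) \<le> a 1 / mu" for n
      using bd[of "Suc n"] by (simp add: lessThan_Suc_atMost)
  qed
  then show ?thesis using summable_Suc_iff by blast
qed

lemma good_psi_summable:
  assumes a: "\<forall>n. a (Suc n) > 0" and b: "\<forall>n. b n \<ge> 1" and mu: "mu > 0"
    and nA: "\<not> escA a b mu t" and nB: "\<not> escB a b mu t"
  shows "summable (psi a b mu t)"
proof -
  have b0: "\<forall>n. b n \<ge> 0" using b by (meson order.trans zero_le_one)
  have g: "psi a b mu t n > 0" for n using good_pos[OF a b0 _ nA nB] mu by simp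
  show ?thesis
  proof (rule summable_comparison_test'[OF good_summable[OF a b mu nA nB], of 0])
    fix n :: nat
    have "psi a b mu t n \<le> b n * psi a b mu t n" using b g[of n]
      using mult_right_mono[of 1 "b n" "psi a b mu t n"] by simp
    then show "norm (psi a b mu t n) \<le> b n * psi a b mu t n" using g[of n] by simp
  qed
qed

lemma good_unique:
  assumes a: "\<forall>n. a (Suc n) > 0" and b: "\<forall>n. b n \<ge> 1" and mu: "mu > 0"
    and nA: "\<not> escA a b mu t" and nB: "\<not> escB a b mu t"
    and nA': "\<not> escA a b mu t'" and nB': "\<not> escB a b mu t'"
    and lt: "t < t'"
  shows False
proof -
  have b0: "\<forall>n. b n \<ge> 0" using b by (meson order.trans zero_le_one)
  let ?x = "psi a b mu t" and ?y = "psi a b mu t'"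
  let ?d = "\<lambda>n. ?y n - ?x n"
  have Rd: "Rec a b mu ?d" using Rec_diff Rec_psi a by blast
  have d1: "?d (Suc 0) > ?d 0" "?d (Suc 0) > 0" using lt by simp_all
  have inc: "?d (Suc j) > ?d j \<and> ?d (Suc j) > 0" for j
    using propA[OF Rd a b0 _ d1, of j] mu by simp
  have ge: "?d (Suc j) \<ge> t' - t" for j
  proof (induction j)
    case 0
    then show ?case by simp
  next
    case (Suc j)
    then show ?case using inc[of "Suc j"] by linarith
  qed
  have xpos: "?x n > 0" for n using good_pos[OF a b0 _ nA nB] mu by simp
  have "?y \<longlonglongrightarrow> 0" using summable_LIMSEQ_zero good_psi_summable[OF a b mu nA' nB'] by blast
  then have "eventually (\<lambda>n. ?y n < t' - t) sequentially"
    using lt by (intro order_tendstoD(2)) auto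
  then obtain N where N: "\<And>n. n \<ge> N \<Longrightarrow> ?y n < t' - t" unfolding eventually_sequentially by blast
  have "?y (Suc N) < t' - t" using N by simp
  moreover have "?y (Suc N) \<ge> t' - t" using ge[of N] xpos[of "Suc N"] by linarith
  ultimately show False by simp
qed

lemma psi_cont: "continuous_on UNIV (\<lambda>z. psi a b (fst z) (snd z) n)"
proof -
  have "continuous_on UNIV (\<lambda>z. psi a b (fst z) (snd z) n) \<and> continuous_on UNIV (\<lambda>z. psi a b (fst z) (snd z) (Suc n))"
  proof (induction n)
    case 0
    then show ?case by (simp add: continuous_on_snd continuous_on_id)
  next
    case (Suc n)
    then show ?case by (auto simp: psi.simps divide_inverse intro!: continuous_intros)
  qed
  then show ?thesis by blast
qed

definition AS :: "(nat\<Rightarrow>real) \<Rightarrow> (nat\<Rightarrow>real) \<Rightarrow> (real \<times> real) set" where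
  "AS a b = {z. escA a b (fst z) (snd z)}"
definition BS :: "(nat\<Rightarrow>real) \<Rightarrow> (nat\<Rightarrow>real) \<Rightarrow> (real \<times> real) set" where
  "BS a b = {z. escB a b (fst z) (snd z)}"

lemma open_AS: "open (AS a b)"
proof -
  have "AS a b = (\<Union>n. {z. psi a b (fst z) (snd z) n < psi a b (fst z) (snd z) (Suc n)} \<inter>
                       {z. 0 < psi a b (fst z) (snd z) (Suc n)})"
    unfolding AS_def escA_def by auto
  moreover have "open ({z. psi a b (fst z) (snd z) n < psi a b (fst z) (snd z) (Suc n)} \<inter>
                       {z. 0 < psi a b (fst z) (snd z) (Suc n)})" for n
    by (intro open_Int open_Collect_less psi_cont continuous_on_const)
  ultimately show ?thesis by (simp add: open_UN)
qed

lemma open_BS: "open (BS a b)"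
proof -
  have "BS a b = (\<Union>n. {z. psi a b (fst z) (snd z) (Suc n) < psi a b (fst z) (snd z) n} \<inter>
                       {z. psi a b (fst z) (snd z) (Suc n) < 0})"
    unfolding BS_def escB_def by auto
  moreover have "open ({z. psi a b (fst z) (snd z) (Suc n) < psi a b (fst z) (snd z) n} \<inter>
                       {z. psi a b (fst z) (snd z) (Suc n) < 0})" for n
    by (intro open_Int open_Collect_less psi_cont continuous_on_const)
  ultimately show ?thesis by (simp add: open_UN)
qed

lemma good_exists:
  assumes a: "\<forall>n. a (Suc n) > 0" and b: "\<forall>n. b n \<ge> 1" and mu: "mu > 0"
  shows "\<exists>t\<in>{0..1}. \<not> escA a b mu t \<and> \<not> escB a b mu t"
proof (rule ccontr)
  assume H: "\<not> ?thesis"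
  have b0: "\<forall>n. b n \<ge> 0" using b by (meson order.trans zero_le_one)
  let ?K = "{mu} \<times> {0..1::real}"
  have c: "connected ?K" using connected_Icc connected_Times connected_sing by blast
  have "AS a b \<inter> BS a b \<inter> ?K = {}"
    using esc_disj[OF a b0] mu unfolding AS_def BS_def by fastforce
  moreover have "?K \<subseteq> AS a b \<union> BS a b" using H unfolding AS_def BS_def by auto
  ultimately have "AS a b \<inter> ?K = {} \<or> BS a b \<inter> ?K = {}"
    using connectedD[OF c open_AS open_BS] by blast
  moreover have "(mu, 1) \<in> AS a b \<inter> ?K" using escA_1[OF a b mu] unfolding AS_def by simp
  moreover have "(mu, 0) \<in> BS a b \<inter> ?K" using escB_0[OF a] unfolding BS_def by simp
  ultimately show False by blast
qed

definition tstar :: "(nat\<Rightarrow>real) \<Rightarrow> (nat\<Rightarrow>real) \<Rightarrow> real \<Rightarrow> real" where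
  "tstar a b mu = (THE t. t \<in> {0..1} \<and> \<not> escA a b mu t \<and> \<not> escB a b mu t)"

lemma tstar_prop:
  assumes a: "\<forall>n. a (Suc n) > 0" and b: "\<forall>n. b n \<ge> 1" and mu: "mu > 0"
  shows "tstar a b mu \<in> {0..1} \<and> \<not> escA a b mu (tstar a b mu) \<and> \<not> escB a b mu (tstar a b mu)"
    and "t \<in> {0..1} \<Longrightarrow> \<not> escA a b mu t \<Longrightarrow> \<not> escB a b mu t \<Longrightarrow> t = tstar a b mu"
proof -
  have uq: "t1 = t2" if "\<not> escA a b mu t1" "\<not> escB a b mu t1" "\<not> escA a b mu t2" "\<not> escB a b mu t2" for t1 t2
    using good_unique[OF a b mu] that by (metis linorder_neqE_linordered_idom)
  have ex1: "\<exists>!t. t \<in> {0..1} \<and> \<not> escA a b mu t \<and> \<not> escB a b mu t"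
    using good_exists[OF a b mu] uq by blast
  show "tstar a b mu \<in> {0..1} \<and> \<not> escA a b mu (tstar a b mu) \<and> \<not> escB a b mu (tstar a b mu)"
    unfolding tstar_def using theI'[OF ex1] .
  show "t \<in> {0..1} \<Longrightarrow> \<not> escA a b mu t \<Longrightarrow> \<not> escB a b mu t \<Longrightarrow> t = tstar a b mu"
    unfolding tstar_def using the1_equality[OF ex1] by blast
qed

lemma tstar_cont:
  assumes a: "\<forall>n. a (Suc n) > 0" and b: "\<forall>n. b n \<ge> 1" and m1: "m1 > 0"
  shows "continuous_on {m1..m2} (tstar a b)"
proof (rule continuous_from_closed_graph[of "{0..1}"])
  show "compact {0..1::real}" by simp
  show "tstar a b \<in> {m1..m2} \<rightarrow> {0..1}" using tstar_prop(1)[OF a b] m1 by auto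
  have eq: "(\<lambda>x. (x, tstar a b x)) ` {m1..m2} = ({m1..m2} \<times> {0..1}) \<inter> - (AS a b \<union> BS a b)"
  proof
    show "(\<lambda>x. (x, tstar a b x)) ` {m1..m2} \<subseteq> ({m1..m2} \<times> {0..1}) \<inter> - (AS a b \<union> BS a b)"
      using tstar_prop(1)[OF a b] m1 unfolding AS_def BS_def by auto
    show "({m1..m2} \<times> {0..1}) \<inter> - (AS a b \<union> BS a b) \<subseteq> (\<lambda>x. (x, tstar a b x)) ` {m1..m2}"
    proof
      fix z assume z: "z \<in> ({m1..m2} \<times> {0..1}) \<inter> - (AS a b \<union> BS a b)"
      obtain mu t where zz: "z = (mu, t)" by fastforce
      have "t = tstar a b mu" using z zz m1 tstar_prop(2)[OF a b, of mu t] unfolding AS_def BS_def by auto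
      then show "z \<in> (\<lambda>x. (x, tstar a b x)) ` {m1..m2}" using z zz by auto
    qed
  qed
  show "closed ((\<lambda>x. (x, tstar a b x)) ` {m1..m2})"
    unfolding eq by (intro closed_Int closed_Times closed_Compl open_Un open_AS open_BS) auto
qed


lemma int_summable_on:
  fixes f :: "int \<Rightarrow> real"
  assumes nn: "\<And>k. f k \<ge> 0" and s1: "summable (\<lambda>n. f (int n))" and s2: "summable (\<lambda>n. f (-1 - int n))"
  shows "f summable_on UNIV"
proof -
  have U: "UNIV = range int \<union> range (\<lambda>n::nat. -1 - int n)"
  proof (rule set_eqI, rule iffI)
    fix k :: int
    show "k \<in> range int \<union> range (\<lambda>n::nat. -1 - int n)"
    proof (cases "k \<ge> 0")
      case True
      then have "k = int (nat k)" by simp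
      then show ?thesis by blast
    next
      case False
      then have "k = -1 - int (nat (-1 - k))" by simp
      then show ?thesis by blast
    qed
  qed simp
  have i1: "inj (int :: nat \<Rightarrow> int)" by (simp add: inj_on_def)
  have i2: "inj (\<lambda>n::nat. -1 - int n)" by (simp add: inj_on_def)
  have a1: "f summable_on range int"
    using summable_on_reindex[OF i1, of f] s1 summable_on_UNIV_nonneg_real_iff[of "f \<circ> int"] nn
    by (simp add: comp_def)
  have a2: "f summable_on range (\<lambda>n::nat. -1 - int n)"
    using summable_on_reindex[OF i2, of f] s2 summable_on_UNIV_nonneg_real_iff[of "f \<circ> (\<lambda>n::nat. -1 - int n)"] nn
    by (simp add: comp_def)
  have d: "range int \<inter> range (\<lambda>n::nat. -1 - int n) = {}" by auto
  show ?thesis using summable_on_Un_disjoint[OF a1 a2 d] U by simp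
qed

lemma summable_sq:
  fixes x :: "nat \<Rightarrow> real"
  assumes s: "summable x" and nn: "\<And>n. x n \<ge> 0"
  shows "summable (\<lambda>n. (x n)\<^sup>2)"
proof -
  have "x \<longlonglongrightarrow> 0" using summable_LIMSEQ_zero[OF s] .
  then have "eventually (\<lambda>n. x n < 1) sequentially" by (intro order_tendstoD(2)) auto
  then obtain N where N: "\<And>n. n \<ge> N \<Longrightarrow> x n < 1" unfolding eventually_sequentially by blast
  show ?thesis
  proof (rule summable_comparison_test'[OF s, of N])
    fix n assume "n \<ge> N"
    then have "x n < 1" using N by blast
    then have "x n * x n \<le> x n" using nn[of n] by (simp add: mult_left_le)
    then show "norm ((x n)\<^sup>2) \<le> x n" by (simp add: power2_eq_square)
  qed
qed

lemma find_mu: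
  fixes r :: "int \<Rightarrow> real"
  assumes r0: "r 0 < 0" and rpos: "\<forall>k. k \<noteq> 0 \<longrightarrow> r k > 0" and rle: "\<forall>k. k \<noteq> 0 \<longrightarrow> r k \<le> 1"
    and hyp: "r 0 + r 2 < 0 \<or> r 0 + r (-2) < 0"
  defines "aR \<equiv> (\<lambda>n::nat. r (2 * int n))" and "bR \<equiv> (\<lambda>n::nat. 1 / r (2 * int n + 1))"
    and "aL \<equiv> (\<lambda>n::nat. r (- 2 * int n))" and "bL \<equiv> (\<lambda>n::nat. 1 / r (2 * (-1 - int n) + 1))"
  defines "RR \<equiv> (\<lambda>mu. aR 1 * (1 - tstar aR bR mu) + mu * bR 0)"
    and "LL \<equiv> (\<lambda>mu. aL 1 * (1 - tstar aL bL mu) + mu * bL 0)"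
  shows "\<exists>mu>0. RR mu * LL mu + r 0 * (RR mu + LL mu) = 0"
proof -
  have aRp: "\<forall>n. aR (Suc n) > 0" unfolding aR_def using rpos by auto
  have aLp: "\<forall>n. aL (Suc n) > 0" unfolding aL_def using rpos by auto
  have one_le: "1 \<le> 1 / r k" if "k \<noteq> 0" for k
    using rpos rle that by (simp add: field_simps)
  have bRp: "\<forall>n. bR n \<ge> 1" unfolding bR_def
  proof
    fix n :: nat have "2 * int n + 1 \<noteq> 0" by linarith
    then show "1 \<le> 1 / r (2 * int n + 1)" using one_le by blast
  qed
  have bLp: "\<forall>n. bL n \<ge> 1" unfolding bL_def
  proof
    fix n :: nat have "2 * (-1 - int n) + 1 \<noteq> 0" by presburger
    then show "1 \<le> 1 / r (2 * (-1 - int n) + 1)" using one_le by blast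
  qed
  define H where "H = (\<lambda>mu. RR mu * LL mu + r 0 * (RR mu + LL mu))"
  define c where "c = - r 0"
  have c0: "c > 0" using r0 c_def by simp
  have aR1: "aR 1 = r 2" and aL1: "aL 1 = r (-2)" unfolding aR_def aL_def by simp_all
  have bnd: "mu * bR 0 \<le> RR mu \<and> RR mu \<le> aR 1 + mu * bR 0 \<and> mu * bL 0 \<le> LL mu \<and> LL mu \<le> aL 1 + mu * bL 0"
    if "mu > 0" for mu
  proof -
    have "tstar aR bR mu \<in> {0..1}" using tstar_prop(1)[OF aRp bRp that] by blast
    moreover have "tstar aL bL mu \<in> {0..1}" using tstar_prop(1)[OF aLp bLp that] by blast
    moreover have "aR 1 > 0" "aL 1 > 0" using aRp aLp by (metis One_nat_def)+
    ultimately have t: "0 \<le> tstar aR bR mu" "tstar aR bR mu \<le> 1" "0 \<le> tstar aL bL mu" "tstar aL bL mu \<le> 1"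
      "aR 1 > 0" "aL 1 > 0" by auto
    have "0 \<le> aR 1 * (1 - tstar aR bR mu)" "aR 1 * (1 - tstar aR bR mu) \<le> aR 1"
      "0 \<le> aL 1 * (1 - tstar aL bL mu)" "aL 1 * (1 - tstar aL bL mu) \<le> aL 1"
      using t by (auto intro: mult_nonneg_nonneg mult_left_le)
    then show ?thesis unfolding RR_def LL_def by linarith
  qed
  have pos: "RR mu > 0 \<and> LL mu > 0" if "mu > 0" for mu
  proof -
    have "mu * bR 0 > 0" "mu * bL 0 > 0" using that bRp bLp
      by (metis less_le_trans mult_pos_pos zero_less_one)+
    then show ?thesis using bnd[OF that] by linarith
  qed
  obtain m1 where m1: "m1 > 0" "H m1 < 0"
  proof (cases "r 0 + r 2 < 0")
    case True
    define m1 where "m1 = (c - aR 1) / (2 * bR 0)"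
    have b0: "bR 0 > 0" using bRp by (meson less_le_trans zero_less_one)
    have m1p: "m1 > 0" unfolding m1_def using True aR1 c_def b0 by simp
    have "RR m1 \<le> aR 1 + m1 * bR 0" using bnd[OF m1p] by blast
    also have "m1 * bR 0 = (c - aR 1) / 2" unfolding m1_def using b0 by simp
    finally have f: "RR m1 \<le> aR 1 + (c - aR 1) / 2" .
    have "aR 1 + (c - aR 1) / 2 < c" using True aR1 c_def by (simp add: field_simps)
    then have "RR m1 < c" using f by linarith
    have e: "H m1 = LL m1 * (RR m1 - c) - c * RR m1" unfolding H_def c_def by (simp add: algebra_simps)
    have "LL m1 * (RR m1 - c) < 0" using pos[OF m1p] \<open>RR m1 < c\<close> by (intro mult_pos_neg) auto
    moreover have "c * RR m1 > 0" using pos[OF m1p] c0 by simp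
    ultimately have "H m1 < 0" using e by linarith
    then show ?thesis using that m1p by blast
  next
    case False
    then have F: "r 0 + r (-2) < 0" using hyp by blast
    define m1 where "m1 = (c - aL 1) / (2 * bL 0)"
    have b0: "bL 0 > 0" using bLp by (meson less_le_trans zero_less_one)
    have m1p: "m1 > 0" unfolding m1_def using F aL1 c_def b0 by simp
    have "LL m1 \<le> aL 1 + m1 * bL 0" using bnd[OF m1p] by blast
    also have "m1 * bL 0 = (c - aL 1) / 2" unfolding m1_def using b0 by simp
    finally have f: "LL m1 \<le> aL 1 + (c - aL 1) / 2" .
    have "aL 1 + (c - aL 1) / 2 < c" using F aL1 c_def by (simp add: field_simps)
    then have "LL m1 < c" using f by linarith
    have e: "H m1 = RR m1 * (LL m1 - c) - c * LL m1" unfolding H_def c_def by (simp add: algebra_simps)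
    have "RR m1 * (LL m1 - c) < 0" using pos[OF m1p] \<open>LL m1 < c\<close> by (intro mult_pos_neg) auto
    moreover have "c * LL m1 > 0" using pos[OF m1p] c0 by simp
    ultimately have "H m1 < 0" using e by linarith
    then show ?thesis using that m1p by blast
  qed
  define m2 where "m2 = m1 + 3 * c + 1"
  have m2p: "m2 > 0" "m1 \<le> m2" unfolding m2_def using m1 c0 by simp_all
  have "RR m2 \<ge> m2" "LL m2 \<ge> m2"
  proof -
    have "m2 * 1 \<le> m2 * bR 0" "m2 * 1 \<le> m2 * bL 0"
      using bRp bLp m2p(1) by (intro mult_left_mono; simp)+
    then show "RR m2 \<ge> m2" "LL m2 \<ge> m2" using bnd[OF m2p(1)] by linarith+
  qed
  then have big: "RR m2 - c > 2 * c" "LL m2 - c > 2 * c" unfolding m2_def using m1 by auto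
  have "(RR m2 - c) * (LL m2 - c) > (2 * c) * (2 * c)"
    using big c0 by (intro mult_strict_mono) auto
  moreover have "H m2 = (RR m2 - c) * (LL m2 - c) - c * c" unfolding H_def c_def by (simp add: algebra_simps)
  moreover have "c * c > 0" using c0 by simp
  ultimately have "H m2 > 0" by linarith
  have cont: "continuous_on {m1..m2} H"
    unfolding H_def RR_def LL_def
    by (intro continuous_intros tstar_cont[OF aRp bRp m1(1)] tstar_cont[OF aLp bLp m1(1)])
  have "\<exists>x. m1 \<le> x \<and> x \<le> m2 \<and> H x = 0"
    by (rule IVT'[OF _ _ m2p(2) cont]) (use m1 \<open>H m2 > 0\<close> in auto)
  then obtain mu where "m1 \<le> mu" "mu \<le> m2" "H mu = 0" by blast
  then show ?thesis using m1 unfolding H_def by (intro exI[of _ mu]) auto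
qed


lemma half_facts:
  assumes a: "\<forall>n. a (Suc n) > 0" and b: "\<forall>n. b n \<ge> 1" and mu: "mu > 0"
  defines "x \<equiv> psi a b mu (tstar a b mu)"
  shows "Rec a b mu x" "\<And>n. x n > 0" "\<And>n. x n \<le> 1" "summable x" "summable (\<lambda>n. b n * x n)"
    "x 0 = 1" "x 1 = tstar a b mu" "0 \<le> tstar a b mu" "tstar a b mu \<le> 1"
proof -
  have b0: "\<forall>n. b n \<ge> 0" using b by (meson order.trans zero_le_one)
  note tp = tstar_prop(1)[OF a b mu]
  have nA: "\<not> escA a b mu (tstar a b mu)" and nB: "\<not> escB a b mu (tstar a b mu)" using tp by auto
  show "Rec a b mu x" unfolding x_def using Rec_psi a by blast
  show g: "x n > 0" for n using good_pos[OF a b0 _ nA nB] mu unfolding x_def by simp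
  show "x n \<le> 1" for n
  proof (induction n)
    case 0 then show ?case unfolding x_def by simp
  next
    case (Suc n) then show ?case using good_pos[OF a b0 _ nA nB, of n] mu unfolding x_def by simp
  qed
  show "summable x" unfolding x_def using good_psi_summable[OF a b mu nA nB] .
  show "summable (\<lambda>n. b n * x n)" unfolding x_def using good_summable[OF a b mu nA nB] .
  show "x 0 = 1" "x 1 = tstar a b mu" unfolding x_def by simp_all
  show "0 \<le> tstar a b mu" "tstar a b mu \<le> 1" using tp by auto
qed

lemma main_abstract:
  fixes r :: "int \<Rightarrow> real"
  assumes r0: "r 0 < 0" and rpos: "\<forall>k. k \<noteq> 0 \<longrightarrow> r k > 0" and rle: "\<forall>k. k \<noteq> 0 \<longrightarrow> r k \<le> 1"
    and hyp: "r 0 + r 2 < 0 \<or> r 0 + r (-2) < 0"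
  shows "\<exists>(lam::real) (v::int \<Rightarrow> real). lam > 0 \<and> v \<noteq> (\<lambda>_. 0)
           \<and> (\<lambda>k. (v k)\<^sup>2) summable_on UNIV
           \<and> (\<forall>k. lam * v k = r (k + 1) * v (k + 1) - r (k - 1) * v (k - 1))"
proof -
  define aR where "aR = (\<lambda>n::nat. r (2 * int n))"
  define bR where "bR = (\<lambda>n::nat. 1 / r (2 * int n + 1))"
  define aL where "aL = (\<lambda>n::nat. r (- 2 * int n))"
  define bL where "bL = (\<lambda>n::nat. 1 / r (2 * (-1 - int n) + 1))"
  define RR where "RR = (\<lambda>mu. aR 1 * (1 - tstar aR bR mu) + mu * bR 0)"
  define LL where "LL = (\<lambda>mu. aL 1 * (1 - tstar aL bL mu) + mu * bL 0)"
  have "\<exists>mu>0. RR mu * LL mu + r 0 * (RR mu + LL mu) = 0"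
    unfolding RR_def LL_def aR_def bR_def aL_def bL_def by (rule find_mu[OF r0 rpos rle hyp])
  then obtain mu where mu: "mu > 0" and Hz: "RR mu * LL mu + r 0 * (RR mu + LL mu) = 0" by blast
  have aRp: "\<forall>n. aR (Suc n) > 0" unfolding aR_def using rpos by auto
  have aLp: "\<forall>n. aL (Suc n) > 0" unfolding aL_def using rpos by auto
  have one_le: "1 \<le> 1 / r k" if "k \<noteq> 0" for k
    using rpos rle that by (simp add: field_simps)
  have bRp: "\<forall>n. bR n \<ge> 1" unfolding bR_def
  proof
    fix n :: nat have "2 * int n + 1 \<noteq> 0" by presburger
    then show "1 \<le> 1 / r (2 * int n + 1)" using one_le by blast
  qed
  have bLp: "\<forall>n. bL n \<ge> 1" unfolding bL_def
  proof
    fix n :: nat have "2 * (-1 - int n) + 1 \<noteq> 0" by presburger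
    then show "1 \<le> 1 / r (2 * (-1 - int n) + 1)" using one_le by blast
  qed
  define tR where "tR = tstar aR bR mu"
  define tL where "tL = tstar aL bL mu"
  define ps where "ps = psi aR bR mu tR"
  define ph where "ph = psi aL bL mu tL"
  note FR = half_facts[OF aRp bRp mu, folded tR_def, folded ps_def]
  note FL = half_facts[OF aLp bLp mu, folded tL_def, folded ph_def]
  define R where "R = RR mu"
  define L where "L = LL mu"
  have R_eq: "R = aR 1 * (1 - tR) + mu * bR 0" unfolding R_def RR_def tR_def ..
  have L_eq: "L = aL 1 * (1 - tL) + mu * bL 0" unfolding L_def LL_def tL_def ..
  have Hz': "R * L + r 0 * (R + L) = 0" using Hz unfolding R_def L_def .
  have Lpos: "L > 0"
  proof -
    have "aL 1 * (1 - tL) \<ge> 0" using FL(9) aLp by (metis One_nat_def diff_ge_0_iff_ge less_le zero_le_mult_iff)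
    moreover have "mu * bL 0 > 0" using mu bLp by (metis less_le_trans mult_pos_pos zero_less_one)
    ultimately show ?thesis using L_eq by linarith
  qed
  define aa where "aa = (\<lambda>m::int. r (2 * m))"
  define bb where "bb = (\<lambda>m::int. 1 / r (2 * m + 1))"
  define u where "u = (\<lambda>m::int. if 0 \<le> m then L * ps (nat m) else - R * ph (nat (-1 - m)))"
  have uR: "u (int n) = L * ps n" for n unfolding u_def by simp
  have uL: "u (-1 - int n) = - R * ph n" for n unfolding u_def by simp
  have E: "aa (m+1) * (u (m+1) - u m) - aa m * (u m - u (m-1)) = mu * bb m * u m" for m
  proof -
    consider (p) n where "m = int (Suc n)" | (z) "m = 0" | (n1) "m = -1" | (q) n where "m = -1 - int (Suc n)"
    proof -
      assume A: "\<And>n. m = int (Suc n) \<Longrightarrow> thesis" "m = 0 \<Longrightarrow> thesis" "m = -1 \<Longrightarrow> thesis"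
        "\<And>n. m = -1 - int (Suc n) \<Longrightarrow> thesis"
      show thesis
      proof (cases "m \<ge> 1")
        case True
        then have "m = int (Suc (nat (m - 1)))" by simp
        then show ?thesis using A(1) by blast
      next
        case False
        show ?thesis
        proof (cases "m \<le> -2")
          case True
          then have "m = -1 - int (Suc (nat (-2 - m)))" by simp
          then show ?thesis using A(4) by blast
        next
          case False
          then have "m = 0 \<or> m = -1" using \<open>\<not> m \<ge> 1\<close> by linarith
          then show ?thesis using A(2,3) by blast
        qed
      qed
    qed
    then show ?thesis
    proof cases
      case p
      have Rn: "aR (Suc (Suc n)) * (ps (Suc (Suc n)) - ps (Suc n)) - aR (Suc n) * (ps (Suc n) - ps n)
                = mu * bR (Suc n) * ps (Suc n)" using FR(1) unfolding Rec_def by blast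
      have m1: "m + 1 = int (Suc (Suc n))" and m0: "m - 1 = int n" using p by simp_all
      have c1: "aa (m+1) = aR (Suc (Suc n))" unfolding aa_def aR_def m1 ..
      have c2: "aa m = aR (Suc n)" unfolding aa_def aR_def p ..
      have c3: "bb m = bR (Suc n)" unfolding bb_def bR_def p ..
      have v1: "u (m+1) = L * ps (Suc (Suc n))" using uR m1 by metis
      have v2: "u m = L * ps (Suc n)" using uR p by metis
      have v3: "u (m-1) = L * ps n" using uR m0 by metis
      have "aa (m+1) * (u (m+1) - u m) - aa m * (u m - u (m-1))
          = L * (aR (Suc (Suc n)) * (ps (Suc (Suc n)) - ps (Suc n)) - aR (Suc n) * (ps (Suc n) - ps n))"
        unfolding c1 c2 v1 v2 v3 by (simp add: algebra_simps)
      also have "\<dots> = L * (mu * bR (Suc n) * ps (Suc n))" using Rn by simp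
      also have "\<dots> = mu * bb m * u m" unfolding c3 v2 by simp
      finally show ?thesis .
    next
      case q
      have Rn: "aL (Suc (Suc n)) * (ph (Suc (Suc n)) - ph (Suc n)) - aL (Suc n) * (ph (Suc n) - ph n)
                = mu * bL (Suc n) * ph (Suc n)" using FL(1) unfolding Rec_def by blast
      have m1: "m + 1 = -1 - int n" and m0: "m - 1 = -1 - int (Suc (Suc n))" using q by simp_all
      have c1: "aa (m+1) = aL (Suc n)" unfolding aa_def aL_def m1 by (intro arg_cong[where f=r]) simp
      have c2: "aa m = aL (Suc (Suc n))" unfolding aa_def aL_def q by (intro arg_cong[where f=r]) simp
      have c3: "bb m = bL (Suc n)" unfolding bb_def bL_def q ..
      have v1: "u (m+1) = - R * ph n" using uL m1 by metis
      have v2: "u m = - R * ph (Suc n)" using uL q by metis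
      have v3: "u (m-1) = - R * ph (Suc (Suc n))" using uL m0 by metis
      have "aa (m+1) * (u (m+1) - u m) - aa m * (u m - u (m-1))
          = - R * (aL (Suc (Suc n)) * (ph (Suc (Suc n)) - ph (Suc n)) - aL (Suc n) * (ph (Suc n) - ph n))"
        unfolding c1 c2 v1 v2 v3 by (simp add: algebra_simps)
      also have "\<dots> = - R * (mu * bL (Suc n) * ph (Suc n))" using Rn by simp
      also have "\<dots> = mu * bb m * u m" unfolding c3 v2 by simp
      finally show ?thesis .
    next
      case z
      have u0: "u 0 = L" using uR[of 0] FR(6) by simp
      have u1: "u 1 = L * tR" using uR[of 1] FR(7) by simp
      have um1: "u (-1) = - R" using uL[of 0] FL(6) by simp
      have c1: "aa 1 = aR 1" unfolding aa_def aR_def by simp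
      have c0: "aa 0 = r 0" unfolding aa_def by simp
      have c3: "bb 0 = bR 0" unfolding bb_def bR_def by simp
      have "aa 1 * (u 1 - u 0) - aa 0 * (u 0 - u (-1)) - mu * bb 0 * u 0
            = - (R * L + r 0 * (R + L))"
        unfolding u0 u1 um1 c1 c0 c3 R_eq by (simp add: algebra_simps)
      then show ?thesis using Hz' z by simp
    next
      case n1
      have u0: "u 0 = L" using uR[of 0] FR(6) by simp
      have um1: "u (-1) = - R" using uL[of 0] FL(6) by simp
      have um2: "u (-2) = - R * tL" using uL[of 1] FL(7) by simp
      have c1: "aa (-1) = aL 1" unfolding aa_def aL_def by simp
      have c0: "aa 0 = r 0" unfolding aa_def by simp
      have c3: "bb (-1) = bL 0" unfolding bb_def bL_def by simp
      have "aa 0 * (u 0 - u (-1)) - aa (-1) * (u (-1) - u (-2)) - mu * bb (-1) * u (-1)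
            = R * L + r 0 * (R + L)"
        unfolding u0 um2 um1 c1 c0 c3 L_eq by (simp add: algebra_simps)
      then show ?thesis using Hz' n1 by simp
    qed
  qed
  define lam where "lam = sqrt mu"
  have lam: "lam > 0" "lam * lam = mu" unfolding lam_def using mu by simp_all
  define v where "v = (\<lambda>k::int. if even k then (u (k div 2) - u (k div 2 - 1)) / lam else bb (k div 2) * u (k div 2))"
  have rne: "r (2 * m + 1) \<noteq> 0" for m
  proof -
    have "2 * m + 1 \<noteq> 0" by presburger
    then show ?thesis using rpos by (metis less_irrefl)
  qed
  have eqn: "lam * v k = r (k + 1) * v (k + 1) - r (k - 1) * v (k - 1)" for k
  proof (cases "even k")
    case True
    then obtain m where k: "k = 2 * m" by blast
    have d1: "(k + 1) div 2 = m" "odd (k + 1)" using k by presburger+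
    have d2: "(k - 1) div 2 = m - 1" "odd (k - 1)" using k by presburger+
    have d0: "k div 2 = m" using k by simp
    have vk: "v k = (u m - u (m - 1)) / lam" unfolding v_def using True d0 by simp
    have vk1: "v (k + 1) = bb m * u m" unfolding v_def using d1 by simp
    have vk2: "v (k - 1) = bb (m - 1) * u (m - 1)" unfolding v_def using d2 by simp
    have r1: "r (k + 1) * bb m = 1" unfolding bb_def k using rne[of m] by simp
    have "r (k - 1) * bb (m - 1) = r (2 * (m - 1) + 1) * bb (m - 1)"
      by (rule arg_cong[where f="\<lambda>x. r x * bb (m - 1)"]) (simp add: k algebra_simps)
    then have r2: "r (k - 1) * bb (m - 1) = 1" unfolding bb_def using rne[of "m - 1"] by simp
    have "r (k + 1) * v (k + 1) - r (k - 1) * v (k - 1) = (r (k + 1) * bb m) * u m - (r (k - 1) * bb (m - 1)) * u (m - 1)"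
      unfolding vk1 vk2 by (simp add: algebra_simps)
    also have "\<dots> = u m - u (m - 1)" unfolding r1 r2 by simp
    also have "\<dots> = lam * v k" unfolding vk using lam by simp
    finally show ?thesis by simp
  next
    case False
    then obtain m where k: "k = 2 * m + 1" using oddE by blast
    have d1: "(k + 1) div 2 = m + 1" "even (k + 1)" using k by presburger+
    have d2: "(k - 1) div 2 = m" "even (k - 1)" using k by presburger+
    have d0: "k div 2 = m" using k by presburger
    have vk: "v k = bb m * u m" unfolding v_def using False d0 by simp
    have vk1: "v (k + 1) = (u (m + 1) - u m) / lam" unfolding v_def using d1 by simp
    have vk2: "v (k - 1) = (u m - u (m - 1)) / lam" unfolding v_def using d2 by simp
    have r1: "r (k + 1) = aa (m + 1)" unfolding aa_def k by (intro arg_cong[where f=r]) simp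
    have r2: "r (k - 1) = aa m" unfolding aa_def k by (intro arg_cong[where f=r]) simp
    have "r (k + 1) * v (k + 1) - r (k - 1) * v (k - 1) = (aa (m+1) * (u (m+1) - u m) - aa m * (u m - u (m-1))) / lam"
      unfolding vk1 vk2 r1 r2 using lam(1) by (simp add: field_simps)
    also have "\<dots> = mu * bb m * u m / lam" using E[of m] by simp
    also have "\<dots> = lam * v k" unfolding vk using lam by (simp add: field_simps)
    finally show ?thesis by simp
  qed
  have summ: "(\<lambda>k. (v k)\<^sup>2) summable_on UNIV"
  proof -
    have sq_ps: "summable (\<lambda>n. (ps n)\<^sup>2)" using summable_sq[OF FR(4)] FR(2) less_imp_le by blast
    have sq_ph: "summable (\<lambda>n. (ph n)\<^sup>2)" using summable_sq[OF FL(4)] FL(2) less_imp_le by blast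
    have bRnn: "bR n * ps n \<ge> 0" for n using bRp FR(2)[of n] by (metis less_imp_le mult_nonneg_nonneg order.trans zero_le_one)
    have bLnn: "bL n * ph n \<ge> 0" for n using bLp FL(2)[of n] by (metis less_imp_le mult_nonneg_nonneg order.trans zero_le_one)
    have sq_bps: "summable (\<lambda>n. (bR n * ps n)\<^sup>2)" using summable_sq[OF FR(5)] bRnn by blast
    have sq_bph: "summable (\<lambda>n. (bL n * ph n)\<^sup>2)" using summable_sq[OF FL(5)] bLnn by blast
    have U2: "(\<lambda>m. (u m)\<^sup>2) summable_on UNIV"
    proof (rule int_summable_on)
      show "summable (\<lambda>n. (u (int n))\<^sup>2)"
        unfolding uR power_mult_distrib using summable_mult[OF sq_ps, of "L\<^sup>2"] by simp
      show "summable (\<lambda>n. (u (-1 - int n))\<^sup>2)"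
        unfolding uL power_mult_distrib using summable_mult[OF sq_ph, of "(-R)\<^sup>2"] by simp
    qed simp
    have bbR: "bb (int n) = bR n" for n unfolding bb_def bR_def ..
    have bbL: "bb (-1 - int n) = bL n" for n unfolding bb_def bL_def ..
    have BU: "(\<lambda>m. (bb m * u m)\<^sup>2) summable_on UNIV"
    proof (rule int_summable_on)
      show "summable (\<lambda>n. (bb (int n) * u (int n))\<^sup>2)"
      proof -
        have "(\<lambda>n. (bb (int n) * u (int n))\<^sup>2) = (\<lambda>n. L\<^sup>2 * (bR n * ps n)\<^sup>2)"
          unfolding uR bbR by (simp add: power_mult_distrib algebra_simps)
        then show ?thesis using summable_mult[OF sq_bps, of "L\<^sup>2"] by simp
      qed
      show "summable (\<lambda>n. (bb (-1 - int n) * u (-1 - int n))\<^sup>2)"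
      proof -
        have "(\<lambda>n. (bb (-1 - int n) * u (-1 - int n))\<^sup>2) = (\<lambda>n. R\<^sup>2 * (bL n * ph n)\<^sup>2)"
          unfolding uL bbL by (simp add: power_mult_distrib algebra_simps)
        then show ?thesis using summable_mult[OF sq_bph, of "R\<^sup>2"] by simp
      qed
    qed simp
    have U2s: "(\<lambda>m. (u (m - 1))\<^sup>2) summable_on UNIV"
    proof -
      have inj: "inj (\<lambda>m::int. m - 1)" by (simp add: inj_on_def)
      have sj: "(\<lambda>m::int. m - 1) ` UNIV = UNIV"
        by (rule surjI[where f="\<lambda>m. m + 1"]) simp
      show ?thesis using summable_on_reindex[OF inj, of "\<lambda>m. (u m)\<^sup>2"] U2 sj by (simp add: comp_def)
    qed
    have odd_part: "(\<lambda>m. (v (2 * m + 1))\<^sup>2) summable_on UNIV"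
    proof -
      have "(\<lambda>m. (v (2 * m + 1))\<^sup>2) = (\<lambda>m. (bb m * u m)\<^sup>2)"
      proof
        fix m :: int
        have "(2 * m + 1) div 2 = m" "odd (2 * m + 1)" by presburger+
        then show "(v (2 * m + 1))\<^sup>2 = (bb m * u m)\<^sup>2" unfolding v_def by simp
      qed
      then show ?thesis using BU by simp
    qed
    have even_part: "(\<lambda>m. (v (2 * m))\<^sup>2) summable_on UNIV"
    proof (rule summable_on_comparison_test)
      show "(\<lambda>m. 2 / mu * ((u m)\<^sup>2 + (u (m - 1))\<^sup>2)) summable_on UNIV"
        by (intro summable_on_cmult_right summable_on_add U2 U2s)
      show "0 \<le> (v (2 * m))\<^sup>2" for m by simp
      show "(v (2 * m))\<^sup>2 \<le> 2 / mu * ((u m)\<^sup>2 + (u (m - 1))\<^sup>2)" for m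
      proof -
        have "v (2 * m) = (u m - u (m - 1)) / lam" unfolding v_def by simp
        then have "(v (2 * m))\<^sup>2 = (u m - u (m - 1))\<^sup>2 / mu"
          using lam by (simp add: power_divide power2_eq_square)
        moreover have "(u m - u (m - 1))\<^sup>2 \<le> 2 * ((u m)\<^sup>2 + (u (m - 1))\<^sup>2)"
          using zero_le_power2[of "u m + u (m - 1)"] by (simp add: power2_eq_square algebra_simps)
        ultimately show ?thesis using mu by (simp add: divide_right_mono)
      qed
    qed
    have Ueq: "UNIV = range (\<lambda>m::int. 2 * m) \<union> range (\<lambda>m::int. 2 * m + 1)"
    proof (rule set_eqI, rule iffI)
      fix k :: int
      show "k \<in> range (\<lambda>m::int. 2 * m) \<union> range (\<lambda>m::int. 2 * m + 1)"
      proof (cases "even k")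
        case True then show ?thesis by blast
      next
        case False then obtain m where "k = 2 * m + 1" using oddE by blast
        then show ?thesis by blast
      qed
    qed simp
    have i1: "inj (\<lambda>m::int. 2 * m)" by (simp add: inj_on_def)
    have i2: "inj (\<lambda>m::int. 2 * m + 1)" by (simp add: inj_on_def)
    have s1: "(\<lambda>k. (v k)\<^sup>2) summable_on range (\<lambda>m::int. 2 * m)"
      using summable_on_reindex[OF i1, of "\<lambda>k. (v k)\<^sup>2"] even_part by (simp add: comp_def)
    have s2: "(\<lambda>k. (v k)\<^sup>2) summable_on range (\<lambda>m::int. 2 * m + 1)"
      using summable_on_reindex[OF i2, of "\<lambda>k. (v k)\<^sup>2"] odd_part by (simp add: comp_def)
    have d: "range (\<lambda>m::int. 2 * m) \<inter> range (\<lambda>m::int. 2 * m + 1) = {}"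
    proof (rule ccontr)
      assume "\<not> ?thesis"
      then obtain m m' :: int where "2 * m = 2 * m' + 1" by blast
      then show False by presburger
    qed
    show ?thesis using summable_on_Un_disjoint[OF s1 s2 d] Ueq by simp
  qed
  have nz: "v \<noteq> (\<lambda>_. 0)"
  proof
    assume "v = (\<lambda>_. 0)"
    then have "v 1 = 0" by simp
    moreover have "v 1 = bb 0 * u 0" unfolding v_def by simp
    moreover have "u 0 = L" using uR[of 0] FR(6) by simp
    moreover have "bb 0 \<ge> 1" using bRp unfolding bR_def bb_def by (metis mult_zero_right of_nat_0)
    ultimately show False using Lpos by simp
  qed
  show ?thesis using lam(1) nz summ eqn by blast
qed


lemma vnorm_sq: "(vnorm v)\<^sup>2 = (real_of_int (fst v))\<^sup>2 + (real_of_int (snd v))\<^sup>2"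
  unfolding vnorm_def by simp

lemma vnorm_nonneg: "vnorm v \<ge> 0"
  unfolding vnorm_def by simp

lemma vnorm_sq_ge1:
  assumes "v \<noteq> (0, 0)"
  shows "(vnorm v)\<^sup>2 \<ge> 1"
proof -
  have "fst v \<noteq> 0 \<or> snd v \<noteq> 0" using assms by (metis prod.collapse)
  then have "(fst v)\<^sup>2 + (snd v)\<^sup>2 \<ge> (1::int)"
    by (metis add.commute add_increasing2 int_one_le_iff_zero_less zero_le_power2 zero_less_power2)
  then have "real_of_int ((fst v)\<^sup>2 + (snd v)\<^sup>2) \<ge> 1" by linarith
  then show ?thesis unfolding vnorm_sq by simp
qed

theorem lemma5:
  fixes p a :: "int \<times> int"
  assumes "p \<noteq> (0, 0)"
    and "vnorm a < vnorm p"
    and "\<forall>k::int. k \<noteq> 0 \<longrightarrow> vnorm (vadd_mult a k p) > vnorm p"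
    and "sqrt (- rho p a 1 * (rho p a 0 + rho p a 2)) > 0
         \<or> sqrt (- rho p a (-1) * (rho p a 0 + rho p a (-2))) > 0"
  shows "\<exists>(lam::real) (v::int \<Rightarrow> real). lam > 0 \<and> v \<noteq> (\<lambda>_. 0)
           \<and> (\<lambda>k. (v k)\<^sup>2) summable_on UNIV
           \<and> (\<forall>k. lam * v k = rho p a (k + 1) * v (k + 1) - rho p a (k - 1) * v (k - 1))"
proof (rule main_abstract)
  have np1: "(vnorm p)\<^sup>2 \<ge> 1" using vnorm_sq_ge1[OF assms(1)] .
  have np: "vnorm p > 0" using np1 vnorm_nonneg[of p]
    by (metis less_eq_real_def not_one_le_zero zero_power2)
  have rpos: "\<forall>k. k \<noteq> 0 \<longrightarrow> rho p a k > 0"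
  proof (intro allI impI)
    fix k :: int assume "k \<noteq> 0"
    then have "vnorm (vadd_mult a k p) > vnorm p" using assms(3) by blast
    then have "(vnorm (vadd_mult a k p))\<^sup>2 > (vnorm p)\<^sup>2" using np by (simp add: power_strict_mono)
    moreover have "(vnorm p)\<^sup>2 > 0" using np by simp
    ultimately have "1 / (vnorm (vadd_mult a k p))\<^sup>2 < 1 / (vnorm p)\<^sup>2"
      by (intro divide_strict_left_mono mult_pos_pos) auto
    then show "rho p a k > 0" unfolding rho_def by simp
  qed
  show "\<forall>k. k \<noteq> 0 \<longrightarrow> rho p a k > 0" by (rule rpos)
  show "\<forall>k. k \<noteq> 0 \<longrightarrow> rho p a k \<le> 1"
  proof (intro allI impI)
    fix k :: int assume "k \<noteq> 0"
    have "1 / (vnorm p)\<^sup>2 \<le> 1" using np1 by (simp add: divide_le_eq_1)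
    moreover have "1 / (vnorm (vadd_mult a k p))\<^sup>2 \<ge> 0" by simp
    ultimately show "rho p a k \<le> 1" unfolding rho_def by linarith
  qed
  have a0: "vadd_mult a 0 p = a" unfolding vadd_mult_def by simp
  have na: "vnorm a > 0"
  proof (rule ccontr)
    assume "\<not> vnorm a > 0"
    then have "vnorm a = 0" using vnorm_nonneg[of a] by simp
    then have "(real_of_int (fst a))\<^sup>2 + (real_of_int (snd a))\<^sup>2 = 0" using vnorm_sq[of a] by simp
    then have "fst a = 0 \<and> snd a = 0" by (simp add: sum_power2_eq_zero_iff)
    then have "vadd_mult a 1 p = p" unfolding vadd_mult_def by simp
    then show False using assms(3)[rule_format, of 1] by simp
  qed
  have r0: "rho p a 0 < 0"
  proof -
    have "(vnorm a)\<^sup>2 < (vnorm p)\<^sup>2" using na assms(2) by (simp add: power_strict_mono)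
    moreover have "(vnorm a)\<^sup>2 > 0" using na by simp
    ultimately have "1 / (vnorm p)\<^sup>2 < 1 / (vnorm a)\<^sup>2"
      by (intro divide_strict_left_mono mult_pos_pos) auto
    then show ?thesis unfolding rho_def a0 by simp
  qed
  show "rho p a 0 < 0" by (rule r0)
  show "rho p a 0 + rho p a 2 < 0 \<or> rho p a 0 + rho p a (-2) < 0"
  proof (cases "sqrt (- rho p a 1 * (rho p a 0 + rho p a 2)) > 0")
    case True
    then have "- rho p a 1 * (rho p a 0 + rho p a 2) > 0" by simp
    moreover have "rho p a 1 > 0" using rpos by simp
    ultimately have "rho p a 0 + rho p a 2 < 0" by (simp add: mult_less_0_iff)
    then show ?thesis by blast
  next
    case False
    then have "sqrt (- rho p a (-1) * (rho p a 0 + rho p a (-2))) > 0" using assms(4) by blast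
    then have "- rho p a (-1) * (rho p a 0 + rho p a (-2)) > 0" by simp
    moreover have "rho p a (-1) > 0" using rpos by simp
    ultimately have "rho p a 0 + rho p a (-2) < 0" by (simp add: mult_less_0_iff)
    then show ?thesis by blast
  qed
qed

end
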